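(* Let $c_{\min}\le c_{\max}$ and $d_{\min}\le d_{\max}$ be integers, $T=\{c_{\min},\dots,c_{\max}\}\times\{d_{\min},\dots,d_{\max}\}$, $a:T\to[0,1]$ and $p:T\to\mathbb{R}$. For $(c,d),(c',d')\in T$ write $(c,d)\to(c',d')$ for the inequality $p_{c,d}-c\,a_{c,d}\ge p_{c',d'}-c\,a_{c',d'}$. Assume $a$ is monotonic: $a_{c,d}\ge a_{c',d'}$ whenever $c\le c'$ and $d\ge d'$. Suppose that for every $(c,d)\in T$ the adjacent constraints hold: $(c,d)\to(c+1,d)$ if $c<c_{\max}$, $(c,d)\to(c-1,d)$ if $c>c_{\min}$, and $(c,d)\to(c,d-1)$ if $d>d_{\min}$. Then for every $(c,d)\in T$: $(c,d)\to(c',d)$ holds for every $c'\in\{c_{\min},\dots,c_{\max}\}$, and $(c,d)\to(c,d')$ holds for every $d'\in\{d_{\min},\dots,d\}$.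
   Context: $a_{c,d}$ is the interim winning probability and $p_{c,d}$ the expected payment of a bidder reporting type $(c,d)$ (cost $c$, predicted path duration $d$); a bidder of true cost $c$ winning with probability $a$ has expected cost $c\,a$. The inequality $(c,d)\to(c',d')$ is the incentive-compatibility constraint for a bidder of true type $(c,d)$ misreporting $(c',d')$. The "adjacent" constraints are those where the report differs from the true type by one unit in one coordinate. *)

theory Defs
  imports Complex_Main
begin

text \<open>IC constraint: a bidder of true type (c,d) does not gain by reporting (c',d').\<close>
definition ic :: "(int \<Rightarrow> int \<Rightarrow> real) \<Rightarrow> (int \<Rightarrow> int \<Rightarrow> real) \<Rightarrow> int \<Rightarrow> int \<Rightarrow> int \<Rightarrow> int \<Rightarrow> bool" where
  "ic a p c d c' d' \<longleftrightarrow> p c d - of_int c * a c d \<ge> p c' d' - of_int c * a c' d'"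

end

theory Submission
  imports Defs
begin

lemma step_c:
  assumes "ic a p c d k d" "ic a p k d k' d" "(of_int k - of_int c) * (a k' d - a k d) \<le> (0::real)"
  shows "ic a p c d k' d"
  using assms unfolding ic_def by (simp add: algebra_simps)

theorem lemma2:
  fixes cmin cmax dmin dmax :: int
    and a p :: "int \<Rightarrow> int \<Rightarrow> real"
  assumes "cmin \<le> cmax" and "dmin \<le> dmax"
    and a_range: "\<And>c d. c \<in> {cmin..cmax} \<Longrightarrow> d \<in> {dmin..dmax} \<Longrightarrow> 0 \<le> a c d \<and> a c d \<le> 1"
    and mono: "\<And>c d c' d'. c \<in> {cmin..cmax} \<Longrightarrow> d \<in> {dmin..dmax} \<Longrightarrow>
                 c' \<in> {cmin..cmax} \<Longrightarrow> d' \<in> {dmin..dmax} \<Longrightarrow>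
                 c \<le> c' \<Longrightarrow> d' \<le> d \<Longrightarrow> a c' d' \<le> a c d"
    and up: "\<And>c d. c \<in> {cmin..cmax} \<Longrightarrow> d \<in> {dmin..dmax} \<Longrightarrow> c < cmax \<Longrightarrow> ic a p c d (c + 1) d"
    and down: "\<And>c d. c \<in> {cmin..cmax} \<Longrightarrow> d \<in> {dmin..dmax} \<Longrightarrow> c > cmin \<Longrightarrow> ic a p c d (c - 1) d"
    and dlow: "\<And>c d. c \<in> {cmin..cmax} \<Longrightarrow> d \<in> {dmin..dmax} \<Longrightarrow> d > dmin \<Longrightarrow> ic a p c d c (d - 1)"
  shows "\<forall>c \<in> {cmin..cmax}. \<forall>d \<in> {dmin..dmax}.
           (\<forall>c' \<in> {cmin..cmax}. ic a p c d c' d) \<and> (\<forall>d' \<in> {dmin..d}. ic a p c d c d')"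
proof (intro ballI, rule conjI)
  fix c d assume c: "c \<in> {cmin..cmax}" and d: "d \<in> {dmin..dmax}"
  have refl: "ic a p c d c d" unfolding ic_def by simp
  have U: "k \<le> cmax \<longrightarrow> ic a p c d k d" if "c \<le> k" for k
    using that
  proof (induction k rule: int_ge_induct)
    case base show ?case using refl by simp
  next
    case (step k)
    show ?case
    proof
      assume "k + 1 \<le> cmax"
      hence k: "k \<in> {cmin..cmax}" "k + 1 \<in> {cmin..cmax}" using step c by auto
      have am: "a (k+1) d \<le> a k d" using mono[OF k(1) d k(2) d] by simp
      have m: "(of_int k - of_int c) * (a (k+1) d - a k d) \<le> (0::real)"
        using step(1) am by (intro mult_nonneg_nonpos) auto
      show "ic a p c d (k+1) d"
      proof (rule step_c[of _ _ _ _ k])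
        show "ic a p c d k d" using step k by auto
        show "ic a p k d (k + 1) d" using up[OF k(1) d] k by auto
        show "(of_int k - of_int c) * (a (k+1) d - a k d) \<le> (0::real)" by (rule m)
      qed
    qed
  qed
  have D: "cmin \<le> k \<longrightarrow> ic a p c d k d" if "k \<le> c" for k
    using that
  proof (induction k rule: int_le_induct)
    case base show ?case using refl by simp
  next
    case (step k)
    show ?case
    proof
      assume "cmin \<le> k - 1"
      hence k: "k \<in> {cmin..cmax}" "k - 1 \<in> {cmin..cmax}" using step c by auto
      have am: "a k d \<le> a (k-1) d" using mono[OF k(2) d k(1) d] by simp
      have m: "(of_int k - of_int c) * (a (k-1) d - a k d) \<le> (0::real)"
        using step(1) am by (intro mult_nonpos_nonneg) auto
      show "ic a p c d (k-1) d"
      proof (rule step_c[of _ _ _ _ k])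
        show "ic a p c d k d" using step k by auto
        show "ic a p k d (k - 1) d" using down[OF k(1) d] k by auto
        show "(of_int k - of_int c) * (a (k-1) d - a k d) \<le> (0::real)" by (rule m)
      qed
    qed
  qed
  show "\<forall>c' \<in> {cmin..cmax}. ic a p c d c' d"
  proof
    fix c' assume "c' \<in> {cmin..cmax}"
    thus "ic a p c d c' d" using U[of c'] D[of c'] by (cases "c \<le> c'") auto
  qed
  have L: "dmin \<le> k \<longrightarrow> ic a p c d c k" if "k \<le> d" for k
    using that
  proof (induction k rule: int_le_induct)
    case base show ?case using refl by simp
  next
    case (step k)
    show ?case
    proof
      assume "dmin \<le> k - 1"
      hence k: "k \<in> {dmin..dmax}" using step d by auto
      have "ic a p c k c (k-1)" using dlow[OF c k] \<open>dmin \<le> k - 1\<close> by simp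
      thus "ic a p c d c (k-1)" using step \<open>dmin \<le> k - 1\<close> unfolding ic_def by auto
    qed
  qed
  show "\<forall>d' \<in> {dmin..d}. ic a p c d c d'" using L by auto
qed

end
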